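(* Let $S$ be a unital ring and let $n\geq2$. Then $\xi(M_n(S))\leq 2$; that is, for every $a\in M_n(S)$ there exist $b_1,c_1,d_1,e_1,b_2,c_2,d_2,e_2\in M_n(S)$ such that \[ a=[b_1,c_1][d_1,e_1]+[b_2,c_2][d_2,e_2]. \]
   Context: $M_n(S)$ is the ring of $n\times n$ matrices over $S$, and $[x,y]=xy-yx$. For a unital ring $R$ generated by its commutators, $\xi(R)$ is the minimal $N\in\mathbb{N}$ such that every element of $R$ is a sum of $N$ elements of the form $[b,c][d,e]$ with $b,c,d,e\in R$. *)

theory Defs
  imports "HOL-Analysis.Analysis"
begin

definition mcomm :: "('a::ring_1)^'n^'n \<Rightarrow> 'a^'n^'n \<Rightarrow> 'a^'n^'n" where
  "mcomm x y = x ** y - y ** x"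

end

theory Submission
  imports Defs
begin


lemma ar: "(x::'r::ring_1) * y = r \<Longrightarrow> x * (y * t) = r * t"
  by (metis mult.assoc)

lemma abstract_main:
  fixes E g N N' K K' a :: "'r::ring_1"
  assumes r1: "E * E = E" and r2: "g * E = g" and r3: "E * g = g" and r4: "g * g = g"
    and r5: "E * N = N" and r6: "N * E = 0" and r7: "E * N' = 0" and r8: "N' * E = N'"
    and r9: "N * N' = E - g" and r10: "N' * N = 1 - E" and r11: "g * N = 0" and r12: "N' * g = 0"
    and r13: "E * K = K" and r14: "K * E = K" and r15: "K * g = K" and r16: "g * K = 0" and r17: "K * K = 0"
    and r18: "E * K' = K'" and r19: "K' * E = K'" and r20: "g * K' = K'" and r21: "K' * g = 0" and r22: "K' * K = g"
  shows "\<exists>b1 c1 d1 e1 b2 c2 d2 e2 :: 'r.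
           a = (b1*c1 - c1*b1) * (d1*e1 - e1*d1) + (b2*c2 - c2*b2) * (d2*e2 - e2*d2)"
proof -
  note R = r1 r2 r3 r4 r5 r6 r7 r8 r9 r10 r11 r12 r13 r14 r15 r16 r17 r18 r19 r20 r21 r22
  have NN: "N * N = 0" by (metis r5 r6 mult.assoc mult_zero_left)
  have N'N': "N' * N' = 0" by (metis r7 r8 mult.assoc mult_zero_right)
  have NK: "N * K = 0" by (metis r6 r13 mult.assoc mult_zero_left)
  have KN': "K * N' = 0" by (metis r7 r14 mult.assoc mult_zero_right)
  have N'K': "N' * K' = 0" by (metis r12 r20 mult.assoc mult_zero_left)
  have NK': "N * K' = 0" by (metis r6 r18 mult.assoc mult_zero_left)
  have K'K': "K' * K' = 0" by (metis r20 r21 mult.assoc mult_zero_left)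
  have KN: "K * N = 0" by (metis r11 r15 mult.assoc mult_zero_right)
  note R2 = R NN N'N' NK KN' N'K' NK' K'K' KN
  note S = R2 R2[THEN ar]
  define P where "P = N + K'*N - N'*K"
  define Q where "Q = N' + K*K'*N"
  define G where "G = E - g - (1 - E) + K + K'"
  define Gi where "Gi = E - g - g - K*K' + K + K'"
  define M where "M = (E - K)*Gi*a*(1-E) + (1-E)*a*(E - K) + g*a*E"
  define W where "W = (E+K)*M - M*(E+K)"
  define Z where "Z = a - G*W"
  have PQ: "P*Q - Q*P = G"
    unfolding P_def Q_def G_def by (simp add: algebra_simps S)
  have GGi: "(E - g + K + K') * Gi = E"
    unfolding Gi_def by (simp add: algebra_simps S)
  have c1: "E*(G*W)*(1-E) = E*a*(1-E)"
  proof -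
    have "E*(G*W)*(1-E) = (E - g + K + K') * Gi * a * (1 - E)"
      unfolding G_def W_def M_def Gi_def by (simp add: algebra_simps S)
    also have "... = E * a * (1 - E)" using GGi by simp
    finally show ?thesis .
  qed
  have c2: "(1-E)*(G*W)*E = (1-E)*a*E"
    unfolding G_def W_def M_def Gi_def by (simp add: algebra_simps S)
  have c3: "g*(G*W)*E = g*a*E"
    unfolding G_def W_def M_def Gi_def by (simp add: algebra_simps S)
  have z1: "E*Z*(1-E) = 0" using c1 unfolding Z_def by (simp add: algebra_simps)
  have z2: "(1-E)*Z*E = 0" using c2 unfolding Z_def by (simp add: algebra_simps)
  have z3: "g*Z*E = 0" using c3 unfolding Z_def by (simp add: algebra_simps)
  have JO: "(E*(N - N') - (N - N')*E) * (E*(N*Z*(1-E) - N'*Z*E) - (N*Z*(1-E) - N'*Z*E)*E) = Z"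
  proof -
    have "(E*(N - N') - (N - N')*E) * (E*(N*Z*(1-E) - N'*Z*E) - (N*Z*(1-E) - N'*Z*E)*E)
        = E*Z*E - g*Z*E + Z - E*Z - Z*E + E*Z*E"
      by (simp add: algebra_simps S)
    also have "... = Z"
      using z1 z2 z3 by (simp add: algebra_simps S)
    finally show ?thesis .
  qed
  have "a = (E*(N - N') - (N - N')*E) * (E*(N*Z*(1-E) - N'*Z*E) - (N*Z*(1-E) - N'*Z*E)*E)
         + (P*Q - Q*P) * ((E+K)*M - M*(E+K))"
  proof -
    have e: "a = Z + G*W" unfolding Z_def by simp
    show ?thesis unfolding JO PQ W_def[symmetric] by (rule e)
  qed
  then show ?thesis by blast
qed

lemma matrix_add_rdistrib': "((A::'a::semiring_1^'n^'m) + B) ** (C::'a^'p^'n) = A ** C + B ** C"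
  by (vector matrix_matrix_mult_def sum.distrib[symmetric] distrib_right)

typedef ('a::ring_1, 'n::finite) sqm = "UNIV :: ('a^'n^'n) set" by simp

instantiation sqm :: (ring_1, finite) ring_1
begin
definition zero_sqm_def: "0 = Abs_sqm 0"
definition one_sqm_def: "1 = Abs_sqm (mat 1)"
definition plus_sqm_def: "x + y = Abs_sqm (Rep_sqm x + Rep_sqm y)"
definition minus_sqm_def: "x - y = Abs_sqm (Rep_sqm x - Rep_sqm y)"
definition uminus_sqm_def: "- x = Abs_sqm (- Rep_sqm x)"
definition times_sqm_def: "x * y = Abs_sqm (Rep_sqm x ** Rep_sqm y)"
instance
proof
  fix a b c :: "('a::ring_1,'b::finite) sqm"
  show "a * b * c = a * (b * c)"
    unfolding times_sqm_def by (simp add: Abs_sqm_inverse matrix_mul_assoc)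
  show "1 * a = a" by (simp add: times_sqm_def one_sqm_def Abs_sqm_inverse Rep_sqm_inverse)
  show "a * 1 = a" by (simp add: times_sqm_def one_sqm_def Abs_sqm_inverse Rep_sqm_inverse)
  show "(a + b) * c = a * c + b * c"
    by (simp add: times_sqm_def plus_sqm_def Abs_sqm_inverse matrix_add_rdistrib')
  show "a * (b + c) = a * b + a * c"
    by (simp add: times_sqm_def plus_sqm_def Abs_sqm_inverse matrix_add_ldistrib)
  show "a + b + c = a + (b + c)" by (simp add: plus_sqm_def Abs_sqm_inverse add.assoc)
  show "a + b = b + a" by (simp add: plus_sqm_def add.commute)
  show "0 + a = a" by (simp add: plus_sqm_def zero_sqm_def Abs_sqm_inverse Rep_sqm_inverse)
  show "- a + a = 0" by (simp add: plus_sqm_def zero_sqm_def uminus_sqm_def Abs_sqm_inverse)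
  show "a - b = a + - b" by (simp add: plus_sqm_def minus_sqm_def uminus_sqm_def Abs_sqm_inverse)
  show "(0::('a::ring_1,'b::finite) sqm) \<noteq> 1"
  proof
    assume "(0::('a::ring_1,'b::finite) sqm) = 1"
    then have "(0::'a^'b^'b) = mat 1" by (simp add: zero_sqm_def one_sqm_def Abs_sqm_inject)
    then have "(0::'a^'b^'b) $ undefined $ undefined = (mat 1::'a^'b^'b) $ undefined $ undefined" by simp
    then show False by (simp add: mat_def)
  qed
qed
end

lemma Rep_sqm_times: "Rep_sqm (x * y) = Rep_sqm x ** Rep_sqm y"
  by (simp add: times_sqm_def Abs_sqm_inverse)
lemma Rep_sqm_plus: "Rep_sqm (x + y) = Rep_sqm x + Rep_sqm y"
  by (simp add: plus_sqm_def Abs_sqm_inverse)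
lemma Rep_sqm_minus: "Rep_sqm (x - y) = Rep_sqm x - Rep_sqm y"
  by (simp add: minus_sqm_def Abs_sqm_inverse)


definition mk :: "('n \<Rightarrow> nat) \<Rightarrow> (nat \<Rightarrow> nat \<Rightarrow> 'a) \<Rightarrow> 'a^'n^'n" where
  "mk \<iota> f = (\<chi> x y. f (\<iota> x) (\<iota> y))"

definition mon :: "(nat \<Rightarrow> nat) \<Rightarrow> (nat \<Rightarrow> bool) \<Rightarrow> nat \<Rightarrow> nat \<Rightarrow> 'a::{zero,one}" where
  "mon \<phi> C i k = (if k = \<phi> i \<and> C i then 1 else 0)"

lemma mon_sum:
  "(\<Sum>k<n. mon \<phi> C i k * (g k j::'a::semiring_1)) = (if \<phi> i < n \<and> C i then g (\<phi> i) j else 0)"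
proof -
  have "(\<Sum>k<n. mon \<phi> C i k * g k j) = (\<Sum>k<n. if k = \<phi> i then (if C i then g k j else 0) else 0)"
    by (rule sum.cong) (auto simp: mon_def)
  also have "... = (if \<phi> i < n \<and> C i then g (\<phi> i) j else 0)"
    by (simp add: sum.delta')
  finally show ?thesis .
qed

lemma mk_mult:
  assumes "bij_betw \<iota> (UNIV::'n::finite set) {..<n}"
  shows "mk \<iota> f ** mk \<iota> g = mk \<iota> (\<lambda>i j. \<Sum>k<n. f i k * (g k j :: 'a::semiring_1))"
proof -
  have "(\<Sum>z\<in>(UNIV::'n set). f (\<iota> x) (\<iota> z) * g (\<iota> z) (\<iota> y)) = (\<Sum>k<n. f (\<iota> x) k * g k (\<iota> y))" for x y
    using sum.reindex_bij_betw[OF assms, of "\<lambda>k. f (\<iota> x) k * g k (\<iota> y)"] by simp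
  then show ?thesis by (simp add: mk_def matrix_matrix_mult_def)
qed

lemma mk_cong:
  assumes "bij_betw \<iota> (UNIV::'n::finite set) {..<n}"
    and "\<And>i j. i < n \<Longrightarrow> j < n \<Longrightarrow> f i j = g i j"
  shows "mk \<iota> f = (mk \<iota> g :: 'a^'n^'n)"
proof -
  have "\<And>x. \<iota> x < n" using assms(1) by (auto simp: bij_betw_def)
  then show ?thesis using assms(2) by (simp add: mk_def vec_eq_iff)
qed

lemma Abs_mk_rel:
  assumes "bij_betw \<iota> (UNIV::'n::finite set) {..<n}"
    and "\<And>i j. i < n \<Longrightarrow> j < n \<Longrightarrow> (\<Sum>k<n. f i k * g k j) = h i j"
  shows "Abs_sqm (mk \<iota> f) * Abs_sqm (mk \<iota> g) = (Abs_sqm (mk \<iota> h) :: ('a::ring_1,'n) sqm)"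
  unfolding times_sqm_def Abs_sqm_inverse[OF UNIV_I] mk_mult[OF assms(1)]
  using mk_cong[OF assms] by simp

lemma Abs_mk_diff: "Abs_sqm (mk \<iota> f) - Abs_sqm (mk \<iota> g) = (Abs_sqm (mk \<iota> (\<lambda>i j. f i j - g i j)) :: ('a::ring_1,'n::finite) sqm)"
  unfolding minus_sqm_def Abs_sqm_inverse[OF UNIV_I]
  by (rule arg_cong[where f=Abs_sqm]) (simp add: mk_def vec_eq_iff)

lemma Abs_mk_zero: "(0 :: ('a::ring_1,'n::finite) sqm) = Abs_sqm (mk \<iota> (\<lambda>i j. 0))"
  by (simp add: zero_sqm_def mk_def vec_eq_iff zero_vec_def)

lemma Abs_mk_one:
  assumes "inj \<iota>"
  shows "(1 :: ('a::ring_1,'n::finite) sqm) = Abs_sqm (mk \<iota> (\<lambda>i j. if i = j then 1 else 0))"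
  using assms by (auto simp: one_sqm_def mk_def vec_eq_iff mat_def inj_eq)

theorem theorem5p4:
  fixes a :: "('a::ring_1)^'n^'n"
  assumes "CARD('n) \<ge> 2"
  shows "\<exists>b1 c1 d1 e1 b2 c2 d2 e2 :: 'a^'n^'n.
           a = mcomm b1 c1 ** mcomm d1 e1 + mcomm b2 c2 ** mcomm d2 e2"
proof -
  obtain h where h: "bij_betw h {0..<CARD('n)} (UNIV::'n set)"
    using ex_bij_betw_nat_finite[of "UNIV::'n set"] by auto
  define n where "n = CARD('n)"
  define \<iota> where "\<iota> = inv_into {0..<CARD('n)} h"
  have bij: "bij_betw \<iota> (UNIV::'n set) {..<n}"
    unfolding \<iota>_def n_def using bij_betw_inv_into[OF h] by (simp add: lessThan_atLeast0)
  have inj: "inj \<iota>" using bij by (simp add: bij_betw_def)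
  have n2: "n \<ge> 2" using assms n_def by simp
  define E :: "('a,'n) sqm" where "E = Abs_sqm (mk \<iota> (mon id even))"
  define g :: "('a,'n) sqm" where "g = Abs_sqm (mk \<iota> (mon id (\<lambda>i. odd n \<and> i = n - 1)))"
  define N :: "('a,'n) sqm" where "N = Abs_sqm (mk \<iota> (mon Suc even))"
  define N' :: "('a,'n) sqm" where "N' = Abs_sqm (mk \<iota> (mon (\<lambda>i. i - 1) odd))"
  define K :: "('a,'n) sqm" where "K = Abs_sqm (mk \<iota> (mon (\<lambda>i. n - 1) (\<lambda>i. odd n \<and> i = n - 3)))"
  define K' :: "('a,'n) sqm" where "K' = Abs_sqm (mk \<iota> (mon (\<lambda>i. n - 3) (\<lambda>i. odd n \<and> i = n - 1)))"
  note ONE = Abs_mk_one[OF inj] and ZERO = Abs_mk_zero[of \<iota>]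
  note U = E_def g_def N_def N'_def K_def K'_def ONE ZERO Abs_mk_diff
  note T = Abs_mk_rel[OF bij]
  have r1: "E * E = E" unfolding U by (rule T) (insert n2, simp only: mon_sum, (auto simp: mon_def); presburger)
  have r2: "g * E = g" unfolding U by (rule T) (insert n2, simp only: mon_sum, (auto simp: mon_def); presburger)
  have r3: "E * g = g" unfolding U by (rule T) (insert n2, simp only: mon_sum, (auto simp: mon_def); presburger)
  have r4: "g * g = g" unfolding U by (rule T) (insert n2, simp only: mon_sum, (auto simp: mon_def); presburger)
  have r5: "E * N = N" unfolding U by (rule T) (insert n2, simp only: mon_sum, (auto simp: mon_def); presburger)
  have r6: "N * E = 0" unfolding U by (rule T) (insert n2, simp only: mon_sum, (auto simp: mon_def); presburger)
  have r7: "E * N' = 0" unfolding U by (rule T) (insert n2, simp only: mon_sum, (auto simp: mon_def); presburger)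
  have r8: "N' * E = N'" unfolding U by (rule T) (insert n2, simp only: mon_sum, (auto simp: mon_def); presburger)
  have r9: "N * N' = E - g" unfolding U by (rule T) (insert n2, simp only: mon_sum, (auto simp: mon_def); presburger)
  have r10: "N' * N = 1 - E" unfolding U by (rule T) (insert n2, simp only: mon_sum, (auto simp: mon_def); presburger)
  have r11: "g * N = 0" unfolding U by (rule T) (insert n2, simp only: mon_sum, (auto simp: mon_def); presburger)
  have r12: "N' * g = 0" unfolding U by (rule T) (insert n2, simp only: mon_sum, (auto simp: mon_def); presburger)
  have r13: "E * K = K" unfolding U by (rule T) (insert n2, simp only: mon_sum, (auto simp: mon_def); presburger)
  have r14: "K * E = K" unfolding U by (rule T) (insert n2, simp only: mon_sum, (auto simp: mon_def); presburger)
  have r15: "K * g = K" unfolding U by (rule T) (insert n2, simp only: mon_sum, (auto simp: mon_def); presburger)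
  have r16: "g * K = 0" unfolding U by (rule T) (insert n2, simp only: mon_sum, (auto simp: mon_def); presburger)
  have r17: "K * K = 0" unfolding U by (rule T) (insert n2, simp only: mon_sum, (auto simp: mon_def); presburger)
  have r18: "E * K' = K'" unfolding U by (rule T) (insert n2, simp only: mon_sum, (auto simp: mon_def); presburger)
  have r19: "K' * E = K'" unfolding U by (rule T) (insert n2, simp only: mon_sum, (auto simp: mon_def); presburger)
  have r20: "g * K' = K'" unfolding U by (rule T) (insert n2, simp only: mon_sum, (auto simp: mon_def); presburger)
  have r21: "K' * g = 0" unfolding U by (rule T) (insert n2, simp only: mon_sum, (auto simp: mon_def); presburger)
  have r22: "K' * K = g" unfolding U by (rule T) (insert n2, simp only: mon_sum, (auto simp: mon_def); presburger)
  obtain b1 c1 d1 e1 b2 c2 d2 e2 :: "('a,'n) sqm" where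
    eq: "Abs_sqm a = (b1*c1 - c1*b1) * (d1*e1 - e1*d1) + (b2*c2 - c2*b2) * (d2*e2 - e2*d2)"
    using abstract_main[OF r1 r2 r3 r4 r5 r6 r7 r8 r9 r10 r11 r12 r13 r14 r15 r16 r17 r18 r19 r20 r21 r22, of "Abs_sqm a"]
    by blast
  have "a = Rep_sqm (Abs_sqm a)" by (simp add: Abs_sqm_inverse)
  also have "... = mcomm (Rep_sqm b1) (Rep_sqm c1) ** mcomm (Rep_sqm d1) (Rep_sqm e1)
                 + mcomm (Rep_sqm b2) (Rep_sqm c2) ** mcomm (Rep_sqm d2) (Rep_sqm e2)"
    unfolding eq by (simp add: Rep_sqm_times Rep_sqm_plus Rep_sqm_minus mcomm_def)
  finally show ?thesis by blast
qed

end
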